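(* Consider the $M/G/\infty$ queueing system: customers arrive according to a Poisson process of rate $\lambda>0$, there are infinitely many servers (so every arriving customer immediately starts service), and service times are i.i.d. with continuous distribution function $B(x)$, independent of the arrival process. Let $\overline{B}(x)=1-B(x)$ and assume $b=\int_0^\infty \overline{B}(x)\,dx<\infty$; put $\rho=\lambda b$ and $\rho(t)=\lambda\int_0^t \overline{B}(x)\,dx$. Let $Q(t)$ be the number of customers in the system at time $t$, with $P(Q(0)=0)=1$, let $P_k(t)=P(Q(t)=k)$ and $P_k=\frac{\rho^k}{k!}e^{-\rho}$ for $k\ge 0$, and let $\varphi(t)=\sup_{k\ge 0}|P_k(t)-P_k|$. Then for all $t\ge 0$, $$\varphi(t)\le C_\rho\,(\rho-\rho(t)) = C_\rho\,\lambda\int_t^\infty \overline{B}(x)\,dx,\qquad\text{where } C_\rho=2\,\frac{\rho^{[\rho]}}{[\rho]!},$$ and $[\rho]$ denotes the integer part of $\rho$.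
   Context: It is known (and may be used) that $P_k(t)=\frac{(\rho(t))^k}{k!}e^{-\rho(t)}$ for $k\ge 0$, so $P_k=\lim_{t\to\infty}P_k(t)$ is the stationary distribution of $Q(t)$. *)

theory Defs
  imports "HOL-Analysis.Analysis"
begin

definition poisson_prob :: "real \<Rightarrow> nat \<Rightarrow> real" where
  "poisson_prob r k = r ^ k / fact k * exp (- r)"

definition rho_t :: "real \<Rightarrow> (real \<Rightarrow> real) \<Rightarrow> real \<Rightarrow> real" where
  "rho_t lam B t = lam * integral {0..t} (\<lambda>x. 1 - B x)"

definition rho_inf :: "real \<Rightarrow> (real \<Rightarrow> real) \<Rightarrow> real" where
  "rho_inf lam B = lam * integral {0..} (\<lambda>x. 1 - B x)"

text \<open>P_k(t) = P(Q(t)=k) for the M/G/infinity queue started empty; by the known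
  result quoted in the context this equals the Poisson probability with mean rho(t).\<close>
definition MGinf_P :: "real \<Rightarrow> (real \<Rightarrow> real) \<Rightarrow> real \<Rightarrow> nat \<Rightarrow> real" where
  "MGinf_P lam B t k = poisson_prob (rho_t lam B t) k"

definition phi :: "real \<Rightarrow> (real \<Rightarrow> real) \<Rightarrow> real \<Rightarrow> real" where
  "phi lam B t = (SUP k. \<bar>MGinf_P lam B t k - poisson_prob (rho_inf lam B) k\<bar>)"

definition C_rho :: "real \<Rightarrow> real" where
  "C_rho r = 2 * r ^ nat \<lfloor>r\<rfloor> / fact (nat \<lfloor>r\<rfloor>)"

end

theory Submission
  imports Defs
begin

lemma pow_fact_le_floor:
  fixes r :: real
  assumes r: "r \<ge> 0"
  shows "r ^ j / fact j \<le> r ^ nat \<lfloor>r\<rfloor> / fact (nat \<lfloor>r\<rfloor>)"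
proof -
  define n where "n = nat \<lfloor>r\<rfloor>"
  define a where "a = (\<lambda>j. r ^ j / (fact j :: real))"
  have step: "a (Suc j) = a j * (r / real (Suc j))" for j
    unfolding a_def by (simp add: field_simps)
  have nr: "real n \<le> r" unfolding n_def using r by linarith
  have rn: "r < real n + 1" unfolding n_def using r by linarith
  have a0: "a j \<ge> 0" for j unfolding a_def using r by simp
  have up: "a j \<le> a (Suc j)" if "j < n" for j
  proof -
    have "real (Suc j) \<le> r" using that nr by linarith
    then have "1 \<le> r / real (Suc j)" by simp
    then show ?thesis unfolding step using a0[of j] by (metis mult.right_neutral mult_left_mono)
  qed
  have down: "a (Suc j) \<le> a j" if "n \<le> j" for j
  proof -
    have "r \<le> real (Suc j)" using that rn by linarith
    then have "r / real (Suc j) \<le> 1" using r by (simp add: divide_le_eq)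
    then show ?thesis unfolding step using a0[of j] by (metis mult.right_neutral mult_left_mono)
  qed
  have "a j \<le> a n"
  proof (cases "j \<le> n")
    case True
    then show ?thesis
    proof (induction rule: inc_induct)
      case base then show ?case by simp
    next
      case (step m) then show ?case using up[of m] by linarith
    qed
  next
    case False
    then have "n \<le> j" by simp
    then show ?thesis
    proof (induction rule: dec_induct)
      case base then show ?case by simp
    next
      case (step m) then show ?case using down[of m] by linarith
    qed
  qed
  then show ?thesis unfolding a_def n_def .
qed

lemma poisson_le:
  assumes "0 \<le> u" "u \<le> r"
  shows "poisson_prob u j \<le> r ^ nat \<lfloor>r\<rfloor> / fact (nat \<lfloor>r\<rfloor>)"
proof -
  have "poisson_prob u j \<le> u ^ j / fact j"
  proof -
    have "exp (- u) \<le> 1" using assms by simp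
    then have "u ^ j * exp (- u) \<le> u ^ j" using assms by (simp add: mult_left_le)
    then show ?thesis unfolding poisson_prob_def by (simp add: divide_right_mono)
  qed
  also have "\<dots> \<le> r ^ j / fact j"
    using assms by (simp add: divide_right_mono power_mono)
  also have "\<dots> \<le> r ^ nat \<lfloor>r\<rfloor> / fact (nat \<lfloor>r\<rfloor>)"
    using pow_fact_le_floor assms by simp
  finally show ?thesis .
qed

lemma poisson_lipschitz:
  assumes "0 \<le> s" "s \<le> r"
  shows "\<bar>poisson_prob s k - poisson_prob r k\<bar> \<le> C_rho r * (r - s)"
proof (cases "s = r")
  case True
  then show ?thesis by simp
next
  case False
  then have lt: "s < r" using assms by simp
  define M where "M = r ^ nat \<lfloor>r\<rfloor> / fact (nat \<lfloor>r\<rfloor>)"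
  define D where "D = (\<lambda>u::real. (real k * u ^ (k - 1) * exp (- u) - u ^ k * exp (- u)) / fact k)"
  have der: "((\<lambda>u. poisson_prob u k) has_real_derivative D u) (at u)" for u
    unfolding poisson_prob_def D_def
    by (auto intro!: derivative_eq_intros simp: field_simps)
  obtain z where z: "s < z" "z < r" "poisson_prob r k - poisson_prob s k = (r - s) * D z"
    using MVT2[OF lt, of "\<lambda>u. poisson_prob u k" D] der by blast
  have z0: "0 \<le> z" "z \<le> r" using z assms by auto
  have t1: "real k * z ^ (k - 1) * exp (- z) / fact k \<le> M"
  proof (cases k)
    case 0 then show ?thesis
      unfolding M_def using assms by simp
  next
    case (Suc m)
    have "real k * z ^ (k - 1) * exp (- z) / fact k = poisson_prob z m"
    proof -
      have "fact k = real (Suc m) * (fact m :: real)" unfolding Suc by simp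
      then show ?thesis unfolding poisson_prob_def Suc by simp
    qed
    then show ?thesis using poisson_le[OF z0] unfolding M_def by simp
  qed
  have t2: "z ^ k * exp (- z) / fact k \<le> M"
    using poisson_le[OF z0, of k] unfolding M_def poisson_prob_def by simp
  have nn1: "0 \<le> real k * z ^ (k - 1) * exp (- z) / fact k" using z0 by simp
  have nn2: "0 \<le> z ^ k * exp (- z) / fact k" using z0 by simp
  have "\<bar>D z\<bar> \<le> 2 * M"
  proof -
    have "D z = real k * z ^ (k - 1) * exp (- z) / fact k - z ^ k * exp (- z) / fact k"
      unfolding D_def by (simp add: diff_divide_distrib)
    then show ?thesis using t1 t2 nn1 nn2 by linarith
  qed
  then have "\<bar>(r - s) * D z\<bar> \<le> (r - s) * (2 * M)"
    using lt by (simp add: abs_mult mult_left_mono)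
  moreover have "C_rho r = 2 * M" unfolding C_rho_def M_def by simp
  ultimately show ?thesis using z(3) by (simp add: abs_minus_commute mult.commute)
qed

theorem mainTheorem1:
  fixes lam :: real and B :: "real \<Rightarrow> real" and t :: real
  assumes lam_pos: "lam > 0"
    and B_mono: "mono B"
    and B_cont: "continuous_on UNIV B"
    and B_neg: "\<And>x. x < 0 \<Longrightarrow> B x = 0"
    and B_top: "(B \<longlongrightarrow> 1) at_top"
    and b_fin: "(\<lambda>x. 1 - B x) integrable_on {0..}"
    and t_nonneg: "t \<ge> 0"
  shows "phi lam B t \<le> C_rho (rho_inf lam B) * (rho_inf lam B - rho_t lam B t)
    \<and> rho_inf lam B - rho_t lam B t = lam * integral {t..} (\<lambda>x. 1 - B x)"
proof -
  define f where "f = (\<lambda>x. 1 - B x)"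
  have Ble: "B x \<le> 1" for x
  proof (rule tendsto_le[OF trivial_limit_at_top_linorder B_top tendsto_const])
    show "\<forall>\<^sub>F y in at_top. B x \<le> B y"
      using B_mono by (auto intro!: eventually_at_top_linorderI[of x] simp: mono_def)
  qed
  have f0: "0 \<le> f x" for x unfolding f_def using Ble[of x] by simp
  have fint: "f integrable_on {0..}" using b_fin unfolding f_def .
  have fcont: "continuous_on UNIV f" unfolding f_def
    by (intro continuous_intros B_cont)
  have int1: "f integrable_on {0..t}"
    using fcont by (intro integrable_continuous_interval) (auto intro: continuous_on_subset)
  have int2: "f integrable_on {t..}"
  proof -
    have "f absolutely_integrable_on {0..}"
      by (rule nonnegative_absolutely_integrable_1) (use fint f0 in auto)
    then have "f absolutely_integrable_on {t..}"
      by (rule set_integrable_subset) (use t_nonneg in auto)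
    then show ?thesis using absolutely_integrable_on_def by blast
  qed
  have "(f has_integral (integral {0..t} f + integral {t..} f)) ({0..t} \<union> {t..})"
  proof (rule has_integral_Un)
    show "(f has_integral integral {0..t} f) {0..t}" using int1 by (simp add: integrable_integral)
    show "(f has_integral integral {t..} f) {t..}" using int2 by (simp add: integrable_integral)
    have "{0..t} \<inter> {t..} = {t}" using t_nonneg by auto
    then show "negligible ({0..t} \<inter> {t..})" by simp
  qed
  moreover have "{0..t} \<union> {t..} = {0..}" using t_nonneg by auto
  ultimately have split: "integral {0..} f = integral {0..t} f + integral {t..} f"
    by (simp add: integral_unique)
  have eq: "rho_inf lam B - rho_t lam B t = lam * integral {t..} (\<lambda>x. 1 - B x)"
    unfolding rho_inf_def rho_t_def using split unfolding f_def by (simp add: algebra_simps)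
  have s0: "0 \<le> rho_t lam B t"
    unfolding rho_t_def using lam_pos int1 f0 unfolding f_def
    by (intro mult_nonneg_nonneg integral_nonneg) auto
  have "0 \<le> integral {t..} f" using int2 f0 by (intro integral_nonneg) auto
  then have "0 \<le> lam * integral {t..} (\<lambda>x. 1 - B x)" using lam_pos unfolding f_def by simp
  then have sr: "rho_t lam B t \<le> rho_inf lam B" using eq by linarith
  have "phi lam B t \<le> C_rho (rho_inf lam B) * (rho_inf lam B - rho_t lam B t)"
    unfolding phi_def MGinf_P_def
    by (rule cSUP_least) (auto intro: poisson_lipschitz[OF s0 sr])
  then show ?thesis using eq by simp
qed

end
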